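(* Let $M$ be an $n$-dimensional submanifold of $\mathbb{H}^m(-r)\subset\mathbb{R}^{m,1}$, and let $f(\cdot,t)$ and $F(\cdot,t)$ be the mean curvature flows of $M$ in $\mathbb{H}^m(-r)$ and in $\mathbb{R}^{m,1}$ respectively. Then for all $x\in M$, $$F(x,t)=\sqrt{1+\tfrac{2nt}{r}}\; f\Big(x,\tfrac{r}{2n}\ln\big(1+\tfrac{2nt}{r}\big)\Big)$$ whenever both sides are defined (in particular, the right-hand side, defined for $t>-r/(2n)$ with $\frac{r}{2n}\ln(1+\frac{2nt}{r})$ in the existence interval of $f$, solves the mean curvature flow of $M$ in $\mathbb{R}^{m,1}$).
   Context: $\mathbb{R}^{m,1}$ denotes $\mathbb{R}^{m+1}$ with $\langle x,y\rangle=\sum_{i=1}^m x_iy_i-x_{m+1}y_{m+1}$; $\mathbb{H}^m(-r)=\{x:\langle x,x\rangle=-r,\ x_{m+1}>0\}$. A mean curvature flow of a Riemannian submanifold $M$ in a semi-Riemannian manifold $X$ is a map $f:M\times I\to X$, $I$ an interval containing $0$, with $f(\cdot,0)$ the inclusion and $\partial_tf=H(\cdot,t)$, the (unnormalized) mean curvature vector of $f(\cdot,t)$ in $X$; solutions are taken to be unique. *)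

theory Defs
  imports "HOL-Analysis.Analysis"
begin

text \<open>Points of R^{m,1}: vectors indexed by 'k option, with None the time-like
  coordinate (index m+1) and Some i (i ranging over 'k, CARD('k) = m) the space-like ones.\<close>

definition lor :: "real^('k::finite option) \<Rightarrow> real^('k option) \<Rightarrow> real" where
  "lor x y = (\<Sum>i\<in>UNIV. x $ Some i * y $ Some i) - x $ None * y $ None"

definition hyp :: "real \<Rightarrow> (real^('k::finite option)) set" where
  "hyp r = {x. lor x x = - r \<and> x $ None > 0}"

definition dpart :: "(real^('n::finite) \<Rightarrow> 'b::real_normed_vector) \<Rightarrow> 'n \<Rightarrow> real^'n \<Rightarrow> 'b" where
  "dpart g i u = frechet_derivative g (at u) (axis i 1)"

definition twice_diff_on :: "(real^('n::finite)) set \<Rightarrow> (real^'n \<Rightarrow> 'b::real_normed_vector) \<Rightarrow> bool" where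
  "twice_diff_on U g \<longleftrightarrow> (\<forall>u\<in>U. g differentiable (at u) \<and> (\<forall>i. dpart g i differentiable (at u)))"

definition ind_metric :: "(real^('n::finite) \<Rightarrow> real^('k::finite option)) \<Rightarrow> real^'n \<Rightarrow> real^'n^'n" where
  "ind_metric g u = (\<chi> i j. lor (dpart g i u) (dpart g j u))"

definition spacelike_at :: "(real^('n::finite) \<Rightarrow> real^('k::finite option)) \<Rightarrow> real^'n \<Rightarrow> bool" where
  "spacelike_at g u \<longleftrightarrow> (\<forall>v. v \<noteq> 0 \<longrightarrow> v \<bullet> (ind_metric g u *v v) > 0)"

definition tan_proj :: "(real^('n::finite) \<Rightarrow> real^('k::finite option)) \<Rightarrow> real^'n \<Rightarrow> real^('k option) \<Rightarrow> real^('k option)" where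
  "tan_proj g u w = (\<Sum>k\<in>UNIV. \<Sum>l\<in>UNIV.
      (matrix_inv (ind_metric g u) $ k $ l * lor w (dpart g k u)) *\<^sub>R dpart g l u)"

text \<open>Mean curvature vector (trace of the second fundamental form, unnormalized)
  of a spacelike immersion into the flat space R^{m,1}.\<close>
definition mc_lor :: "(real^('n::finite) \<Rightarrow> real^('k::finite option)) \<Rightarrow> real^'n \<Rightarrow> real^('k option)" where
  "mc_lor g u = (\<Sum>i\<in>UNIV. \<Sum>j\<in>UNIV.
      matrix_inv (ind_metric g u) $ i $ j *\<^sub>R
        (dpart (dpart g j) i u - tan_proj g u (dpart (dpart g j) i u)))"

text \<open>Mean curvature vector of an immersion into H^m(-r): the Levi-Civita connection of
  H^m(-r) is the lor-orthogonal projection onto T_p H^m(-r) of the flat derivative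
  (Gauss formula); the normal of H^m(-r) at p is p, with lor p p = -r.\<close>
definition mc_hyp :: "real \<Rightarrow> (real^('n::finite) \<Rightarrow> real^('k::finite option)) \<Rightarrow> real^'n \<Rightarrow> real^('k option)" where
  "mc_hyp r g u = mc_lor g u + (lor (mc_lor g u) (g u) / r) *\<^sub>R g u"

definition chart :: "(real^('k::finite option)) set \<Rightarrow> (real^('n::finite)) set \<Rightarrow> (real^'n \<Rightarrow> real^('k option)) \<Rightarrow> bool" where
  "chart M U \<phi> \<longleftrightarrow> open U \<and> inj_on \<phi> U \<and> (\<exists>V. open V \<and> \<phi> ` U = M \<inter> V)
     \<and> continuous_on (\<phi> ` U) (inv_into U \<phi>) \<and> twice_diff_on U \<phi>
     \<and> (\<forall>u\<in>U. inj (frechet_derivative \<phi> (at u)))"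

text \<open>M is an n-dimensional (n = CARD('n)) C^2 submanifold of R^{m,1}.\<close>
definition submanifold :: "'n::finite itself \<Rightarrow> (real^('k::finite option)) set \<Rightarrow> bool" where
  "submanifold _ M \<longleftrightarrow> (\<forall>x\<in>M. \<exists>(U :: (real^'n) set) \<phi>. chart M U \<phi> \<and> x \<in> \<phi> ` U)"

definition spacelike_imm :: "'n::finite itself \<Rightarrow> (real^('k::finite option)) set \<Rightarrow> (real^('k option) \<Rightarrow> real^('k option)) \<Rightarrow> bool" where
  "spacelike_imm _ M h \<longleftrightarrow> (\<forall>(U :: (real^'n) set) \<phi>. chart M U \<phi> \<longrightarrow>
      twice_diff_on U (h \<circ> \<phi>) \<and> (\<forall>u\<in>U. spacelike_at (h \<circ> \<phi>) u))"

definition mcf_lor :: "'n::finite itself \<Rightarrow> (real^('k::finite option)) set \<Rightarrow> real set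
    \<Rightarrow> (real^('k option) \<Rightarrow> real \<Rightarrow> real^('k option)) \<Rightarrow> bool" where
  "mcf_lor N M I F \<longleftrightarrow> is_interval I \<and> 0 \<in> I \<and> (\<forall>x\<in>M. F x 0 = x)
     \<and> (\<forall>t\<in>I. spacelike_imm N M (\<lambda>x. F x t))
     \<and> (\<forall>x\<in>M. \<forall>t\<in>I. \<forall>(U :: (real^'n) set) \<phi> u. chart M U \<phi> \<and> u \<in> U \<and> \<phi> u = x \<longrightarrow>
          ((\<lambda>s. F x s) has_vector_derivative mc_lor (\<lambda>v. F (\<phi> v) t) u) (at t within I))"

definition mcf_hyp :: "'n::finite itself \<Rightarrow> real \<Rightarrow> (real^('k::finite option)) set \<Rightarrow> real set
    \<Rightarrow> (real^('k option) \<Rightarrow> real \<Rightarrow> real^('k option)) \<Rightarrow> bool" where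
  "mcf_hyp N r M I f \<longleftrightarrow> is_interval I \<and> 0 \<in> I \<and> (\<forall>x\<in>M. f x 0 = x)
     \<and> (\<forall>x\<in>M. \<forall>t\<in>I. f x t \<in> hyp r)
     \<and> (\<forall>t\<in>I. spacelike_imm N M (\<lambda>x. f x t))
     \<and> (\<forall>x\<in>M. \<forall>t\<in>I. \<forall>(U :: (real^'n) set) \<phi> u. chart M U \<phi> \<and> u \<in> U \<and> \<phi> u = x \<longrightarrow>
          ((\<lambda>s. f x s) has_vector_derivative mc_hyp r (\<lambda>v. f (\<phi> v) t) u) (at t within I))"

end

theory Submission imports Defs begin

definition rfl :: "real^('k::finite option) \<Rightarrow> real^('k option)" where
  "rfl y = (\<chi> j. if j = None then - y$j else y$j)"

lemma lor_inner: "lor x y = x \<bullet> rfl y"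
proof -
  have "x \<bullet> rfl y = (\<Sum>j\<in>insert None (range Some). x$j * rfl y $ j)"
    by (simp add: inner_vec_def UNIV_option_conv[symmetric])
  also have "\<dots> = x$None * (- y$None) + (\<Sum>j\<in>range Some. x$j * rfl y $ j)"
    by (subst sum.insert) (auto simp: rfl_def)
  also have "(\<Sum>j\<in>range Some. x$j * rfl y $ j) = (\<Sum>i\<in>UNIV. x$Some i * y$Some i)"
    by (subst sum.reindex) (auto simp: rfl_def)
  finally show ?thesis unfolding lor_def by simp
qed

lemma linear_rfl: "linear rfl"
  by (rule linearI) (auto simp: rfl_def vec_eq_iff)

lemma bb_lor: "bounded_bilinear lor"
proof -
  have "bounded_bilinear (\<lambda>x y. id x \<bullet> rfl y)"
    using bounded_bilinear.comp[OF bounded_bilinear_inner bounded_linear_ident, of rfl]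
      linear_rfl linear_conv_bounded_linear by auto
  thus ?thesis by (simp add: lor_inner[abs_def])
qed

lemma lor_sym: "lor x y = lor y x"
  unfolding lor_def by (simp add: mult.commute)

lemma lor_sum_left: "lor (sum g S) x = (\<Sum>i\<in>S. lor (g i) x)"
  by (rule bounded_bilinear.sum_left[OF bb_lor])
lemma lor_sum_right: "lor x (sum g S) = (\<Sum>i\<in>S. lor x (g i))"
  by (rule bounded_bilinear.sum_right[OF bb_lor])
lemma lor_scaleR_left: "lor (c *\<^sub>R x) y = c * lor x y"
  using bounded_bilinear.scaleR_left[OF bb_lor] by simp
lemma lor_scaleR_right: "lor x (c *\<^sub>R y) = c * lor x y"
  using bounded_bilinear.scaleR_right[OF bb_lor] by simp
lemma lor_diff_left: "lor (a - b) y = lor a y - lor b y"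
  by (rule bounded_bilinear.diff_left[OF bb_lor])
lemma lor_diff_right: "lor y (a - b) = lor y a - lor y b"
  by (rule bounded_bilinear.diff_right[OF bb_lor])
lemma lor_add_left: "lor (a + b) y = lor a y + lor b y"
  by (rule bounded_bilinear.add_left[OF bb_lor])

lemma lor_const_deriv:
  assumes U: "open U" "u \<in> U" and a: "a differentiable at u" and b: "b differentiable at u"
    and c: "\<forall>v\<in>U. lor (a v) (b v) = c"
  shows "lor (frechet_derivative a (at u) h) (b u) + lor (a u) (frechet_derivative b (at u) h) = 0"
proof -
  have da: "(a has_derivative frechet_derivative a (at u)) (at u)"
    using a frechet_derivative_works by blast
  have db: "(b has_derivative frechet_derivative b (at u)) (at u)"
    using b frechet_derivative_works by blast
  have d1: "((\<lambda>v. lor (a v) (b v)) has_derivative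
      (\<lambda>h. lor (a u) (frechet_derivative b (at u) h) + lor (frechet_derivative a (at u) h) (b u))) (at u)"
    by (rule bounded_bilinear.FDERIV[OF bb_lor da db])
  have d2: "((\<lambda>v. lor (a v) (b v)) has_derivative (\<lambda>h. 0)) (at u)"
    by (rule has_derivative_transform_within_open[OF has_derivative_const[of c] U]) (use c in auto)
  have "(\<lambda>h. lor (a u) (frechet_derivative b (at u) h) + lor (frechet_derivative a (at u) h) (b u)) = (\<lambda>h. 0)"
    using has_derivative_unique[OF d1 d2] .
  from fun_cong[OF this, of h] show ?thesis by simp
qed

lemma dpart_works:
  assumes "g differentiable at u"
  shows "(g has_derivative frechet_derivative g (at u)) (at u)"
  using assms frechet_derivative_works by blast

lemma hyp_first:
  assumes U: "open U" "u \<in> U" and g: "g differentiable at u"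
    and c: "\<forall>v\<in>U. lor (g v) (g v) = c"
  shows "lor (dpart g i u) (g u) = 0"
  using lor_const_deriv[OF U g g c, of "axis i 1"]
  by (simp add: dpart_def lor_sym[of "g u"])

lemma hyp_second:
  assumes U: "open U" "u \<in> U" and tw: "twice_diff_on U g"
    and c: "\<forall>v\<in>U. lor (g v) (g v) = c"
  shows "lor (dpart (dpart g j) i u) (g u) = - lor (dpart g j u) (dpart g i u)"
proof -
  have z: "\<forall>v\<in>U. lor (dpart g j v) (g v) = 0"
    using hyp_first[OF U(1) _ _ c] tw unfolding twice_diff_on_def by blast
  show ?thesis
    using lor_const_deriv[OF U _ _ z, of "axis i 1"] tw U
    unfolding twice_diff_on_def by (simp add: dpart_def[of _ i] algebra_simps)
qed

lemma dpart_scale: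
  assumes "g differentiable at v"
  shows "dpart (\<lambda>w. c *\<^sub>R g w) i v = c *\<^sub>R dpart g i v"
proof -
  have "((\<lambda>w. c *\<^sub>R g w) has_derivative (\<lambda>h. c *\<^sub>R frechet_derivative g (at v) h)) (at v)"
    using has_derivative_scaleR_right[OF dpart_works[OF assms]] .
  from frechet_derivative_at[OF this] show ?thesis
    unfolding dpart_def by (metis)
qed

lemma dpart2_scale:
  assumes U: "open U" "u \<in> U" and tw: "twice_diff_on U g"
  shows "dpart (dpart (\<lambda>w. c *\<^sub>R g w) j) i u = c *\<^sub>R dpart (dpart g j) i u"
proof -
  have eq: "\<forall>v\<in>U. dpart (\<lambda>w. c *\<^sub>R g w) j v = c *\<^sub>R dpart g j v"
    using tw dpart_scale unfolding twice_diff_on_def by blast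
  have d: "(dpart g j differentiable at u)" using tw U unfolding twice_diff_on_def by blast
  have "((\<lambda>w. c *\<^sub>R dpart g j w) has_derivative (\<lambda>h. c *\<^sub>R frechet_derivative (dpart g j) (at u) h)) (at u)"
    using has_derivative_scaleR_right[OF dpart_works[OF d]] .
  then have "(dpart (\<lambda>w. c *\<^sub>R g w) j has_derivative (\<lambda>h. c *\<^sub>R frechet_derivative (dpart g j) (at u) h)) (at u)"
    by (rule has_derivative_transform_within_open[OF _ U]) (use eq in auto)
  from frechet_derivative_at[OF this] show ?thesis
    unfolding dpart_def[of "dpart _ j"] by metis
qed

lemma twice_scale:
  assumes U: "open U" and tw: "twice_diff_on U g"
  shows "twice_diff_on U (\<lambda>w. c *\<^sub>R g w)"
  unfolding twice_diff_on_def
proof (intro ballI conjI allI)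
  fix u i assume u: "u \<in> U"
  show "(\<lambda>w. c *\<^sub>R g w) differentiable at u"
    using tw u unfolding twice_diff_on_def by (auto intro: differentiable_compose differentiable_scaleR)
  have eq: "\<forall>v\<in>U. dpart (\<lambda>w. c *\<^sub>R g w) i v = c *\<^sub>R dpart g i v"
    using tw dpart_scale unfolding twice_diff_on_def by blast
  have d: "(dpart g i differentiable at u)" using tw u unfolding twice_diff_on_def by blast
  have "((\<lambda>w. c *\<^sub>R dpart g i w) has_derivative (\<lambda>h. c *\<^sub>R frechet_derivative (dpart g i) (at u) h)) (at u)"
    using has_derivative_scaleR_right[OF dpart_works[OF d]] .
  then have "(dpart (\<lambda>w. c *\<^sub>R g w) i has_derivative (\<lambda>h. c *\<^sub>R frechet_derivative (dpart g i) (at u) h)) (at u)"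
    by (rule has_derivative_transform_within_open[OF _ U u]) (use eq in auto)
  then show "dpart (\<lambda>w. c *\<^sub>R g w) i differentiable at u"
    unfolding differentiable_def by blast
qed

lemma ind_metric_scale:
  assumes "g differentiable at u"
  shows "ind_metric (\<lambda>w. c *\<^sub>R g w) u = (c^2) *\<^sub>R ind_metric g u"
  unfolding ind_metric_def dpart_scale[OF assms]
  by (simp add: vec_eq_iff lor_scaleR_left lor_scaleR_right power2_eq_square)

lemma inv_props:
  assumes "invertible A"
  shows "A ** matrix_inv A = mat 1 \<and> matrix_inv A ** A = mat 1"
  using assms unfolding invertible_def matrix_inv_def by (rule someI_ex)

lemma matrix_inv_scale:
  fixes A :: "real^'n^'n"
  assumes A: "invertible A" and k: "k \<noteq> 0"
  shows "matrix_inv (k *\<^sub>R A) = (1/k) *\<^sub>R matrix_inv A"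
proof -
  let ?B = "(1/k) *\<^sub>R matrix_inv A"
  have P: "(k *\<^sub>R A) ** ?B = mat 1 \<and> ?B ** (k *\<^sub>R A) = mat 1"
    using inv_props[OF A] k by (simp add: matrix_scalar_ac)
  have U: "X = ?B" if "(k *\<^sub>R A) ** X = mat 1 \<and> X ** (k *\<^sub>R A) = mat 1" for X
  proof -
    have "X = X ** ((k *\<^sub>R A) ** ?B)" using P by simp
    also have "\<dots> = (X ** (k *\<^sub>R A)) ** ?B" by (simp add: matrix_mul_assoc)
    also have "\<dots> = ?B" using that by simp
    finally show ?thesis .
  qed
  show ?thesis unfolding matrix_inv_def[of "k *\<^sub>R A"]
    by (rule some_equality) (use P U in blast)+
qed

lemma spacelike_inv:
  assumes "spacelike_at g u"
  shows "invertible (ind_metric g u)"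
proof -
  have "\<forall>x. ind_metric g u *v x = 0 \<longrightarrow> x = 0"
    using assms unfolding spacelike_at_def by (metis inner_zero_right less_irrefl)
  then obtain B where "B ** ind_metric g u = mat 1"
    using matrix_left_invertible_ker by blast
  then show ?thesis unfolding invertible_def using matrix_left_right_inverse by blast
qed

lemma tan_proj_scale:
  assumes d: "g differentiable at u" and A: "invertible (ind_metric g u)" and c: "c \<noteq> 0"
  shows "tan_proj (\<lambda>w. c *\<^sub>R g w) u (c *\<^sub>R x) = c *\<^sub>R tan_proj g u x"
proof -
  have mi: "matrix_inv (ind_metric (\<lambda>w. c *\<^sub>R g w) u) = (1/c^2) *\<^sub>R matrix_inv (ind_metric g u)"
    using ind_metric_scale[OF d] matrix_inv_scale[OF A] c by simp
  show ?thesis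
    unfolding tan_proj_def mi dpart_scale[OF d]
    by (simp add: lor_scaleR_left lor_scaleR_right scaleR_sum_right power2_eq_square c mult_ac)
qed

lemma mc_lor_scale:
  assumes U: "open U" "u \<in> U" and tw: "twice_diff_on U g"
    and A: "invertible (ind_metric g u)" and c: "c \<noteq> 0"
  shows "mc_lor (\<lambda>w. c *\<^sub>R g w) u = (1/c) *\<^sub>R mc_lor g u"
proof -
  have d: "g differentiable at u" using tw U unfolding twice_diff_on_def by blast
  have mi: "matrix_inv (ind_metric (\<lambda>w. c *\<^sub>R g w) u) = (1/c^2) *\<^sub>R matrix_inv (ind_metric g u)"
    using ind_metric_scale[OF d] matrix_inv_scale[OF A] c by simp
  show ?thesis
    unfolding mc_lor_def mi dpart2_scale[OF U tw] tan_proj_scale[OF d A c]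
    by (simp add: scaleR_sum_right scaleR_diff_right[symmetric] power2_eq_square c)
qed

lemma mc_lor_trace:
  fixes g :: "real^('n::finite) \<Rightarrow> real^('k::finite option)"
  assumes U: "open U" "u \<in> U" and tw: "twice_diff_on U g"
    and A: "invertible (ind_metric g u)" and cst: "\<forall>v\<in>U. lor (g v) (g v) = k"
  shows "lor (mc_lor g u) (g u) = - real CARD('n)"
proof -
  have d: "g differentiable at u" using tw U unfolding twice_diff_on_def by blast
  let ?A = "ind_metric g u" and ?B = "matrix_inv (ind_metric g u)"
  have tp: "lor (tan_proj g u w) (g u) = 0" for w
    unfolding tan_proj_def
    by (simp add: lor_sum_left lor_scaleR_left hyp_first[OF U d cst])
  have "lor (mc_lor g u) (g u) = (\<Sum>i\<in>UNIV. \<Sum>j\<in>UNIV. ?B $ i $ j * (- ?A $ j $ i))"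
    unfolding mc_lor_def
    by (simp add: lor_sum_left lor_scaleR_left lor_diff_left tp hyp_second[OF U tw cst]
        ind_metric_def)
  also have "\<dots> = - (\<Sum>i\<in>UNIV. (?B ** ?A) $ i $ i)"
    by (simp add: matrix_matrix_mult_def sum_negf)
  also have "\<dots> = - real CARD('n)"
    using inv_props[OF A] by (simp add: mat_def)
  finally show ?thesis .
qed

lemma spacelike_scale:
  assumes d: "g differentiable at u" and sp: "spacelike_at g u" and c: "c \<noteq> 0"
  shows "spacelike_at (\<lambda>w. c *\<^sub>R g w) u"
  unfolding spacelike_at_def ind_metric_scale[OF d]
proof (intro allI impI)
  fix v :: "real^'a" assume "v \<noteq> 0"
  then have "v \<bullet> (ind_metric g u *v v) > 0" using sp unfolding spacelike_at_def by blast
  moreover have "c^2 > 0" using c by simp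
  moreover have "(c^2 *\<^sub>R ind_metric g u) *v v = c^2 *\<^sub>R (ind_metric g u *v v)"
    by (simp add: vec_eq_iff matrix_vector_mult_def sum_distrib_left mult_ac)
  ultimately show "v \<bullet> ((c^2 *\<^sub>R ind_metric g u) *v v) > 0"
    by simp
qed

theorem lemma3p2:
  fixes M :: "(real^('k::finite option)) set"
    and r :: real and I J :: "real set"
    and f F :: "real^('k option) \<Rightarrow> real \<Rightarrow> real^('k option)"
  assumes r_pos: "r > 0"
    and subM: "submanifold TYPE('n::finite) M"
    and M_hyp: "M \<subseteq> hyp r"
    and f_flow: "mcf_hyp TYPE('n) r M I f"
    and F_flow: "mcf_lor TYPE('n) M J F"
    and F_unique: "\<forall>J' F'. mcf_lor TYPE('n) M J' F' \<longrightarrow> (\<forall>x\<in>M. \<forall>t\<in>J \<inter> J'. F' x t = F x t)"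
  shows "mcf_lor TYPE('n) M
           {t. - r / (2 * real CARD('n)) < t
               \<and> r / (2 * real CARD('n)) * ln (1 + 2 * real CARD('n) * t / r) \<in> I}
           (\<lambda>x t. sqrt (1 + 2 * real CARD('n) * t / r) *\<^sub>R
                    f x (r / (2 * real CARD('n)) * ln (1 + 2 * real CARD('n) * t / r)))
       \<and> (\<forall>x\<in>M. \<forall>t\<in>J. - r / (2 * real CARD('n)) < t
               \<and> r / (2 * real CARD('n)) * ln (1 + 2 * real CARD('n) * t / r) \<in> I \<longrightarrow>
            F x t = sqrt (1 + 2 * real CARD('n) * t / r) *\<^sub>R
                    f x (r / (2 * real CARD('n)) * ln (1 + 2 * real CARD('n) * t / r)))"
proof -
  define N where "N = real CARD('n)"
  have N: "N > 0" by (simp add: N_def)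
  define S where "S = (\<lambda>t. 1 + 2 * N * t / r)"
  define lam where "lam = (\<lambda>t. sqrt (S t))"
  define tau where "tau = (\<lambda>t. r / (2 * N) * ln (S t))"
  define K where "K = {t. - r / (2 * N) < t \<and> tau t \<in> I}"
  define G where "G = (\<lambda>x t. lam t *\<^sub>R f x (tau t))"
  from f_flow have Iint: "is_interval I" and I0: "0 \<in> I" and f0: "\<forall>x\<in>M. f x 0 = x"
    and fhyp: "\<forall>x\<in>M. \<forall>t\<in>I. f x t \<in> hyp r"
    and fsp: "\<forall>t\<in>I. spacelike_imm TYPE('n) M (\<lambda>x. f x t)"
    and fder: "\<forall>x\<in>M. \<forall>t\<in>I. \<forall>(U :: (real^'n) set) \<phi> u. chart M U \<phi> \<and> u \<in> U \<and> \<phi> u = x \<longrightarrow>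
          ((\<lambda>s. f x s) has_vector_derivative mc_hyp r (\<lambda>v. f (\<phi> v) t) u) (at t within I)"
    unfolding mcf_hyp_def by blast+
  have Spos: "S t > 0" if "- r / (2 * N) < t" for t
  proof -
    have "- r < 2 * N * t" using that N by (simp add: field_simps)
    then show ?thesis using r_pos by (simp add: S_def field_simps)
  qed
  have Smono: "S a \<le> S b" if "a \<le> b" for a b
    unfolding S_def using that N r_pos by (simp add: divide_right_mono)
  have taumono: "tau a \<le> tau b" if "- r / (2 * N) < a" "a \<le> b" for a b
  proof -
    have "ln (S a) \<le> ln (S b)" using Spos[OF that(1)] Smono[OF that(2)] by simp
    then show ?thesis unfolding tau_def using r_pos N
      by (simp, intro divide_right_mono mult_left_mono) auto
  qed
  have Kint: "is_interval K"
    unfolding is_interval_1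
  proof (intro ballI allI impI)
    fix a b y assume a: "a \<in> K" and b: "b \<in> K" and y: "a \<le> y \<and> y \<le> b"
    have ya: "- r / (2 * N) < y" using a y unfolding K_def by auto
    have "tau a \<le> tau y" "tau y \<le> tau b"
      using taumono a b y ya unfolding K_def by auto
    then have "tau y \<in> I" using Iint a b unfolding K_def is_interval_1 by blast
    then show "y \<in> K" using ya unfolding K_def by simp
  qed
  have tau0: "tau 0 = 0" by (simp add: tau_def S_def)
  have lam0: "lam 0 = 1" by (simp add: lam_def S_def)
  have K0: "0 \<in> K" unfolding K_def using tau0 I0 r_pos N by simp
  have G0: "\<forall>x\<in>M. G x 0 = x" using f0 I0 by (simp add: G_def tau0 lam0)
  have lampos: "lam t > 0" if "t \<in> K" for t
    using Spos that unfolding K_def lam_def by simp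
  have Gsp: "\<forall>t\<in>K. spacelike_imm TYPE('n) M (\<lambda>x. G x t)"
    unfolding spacelike_imm_def
  proof (intro ballI allI impI conjI)
    fix t and U :: "(real^'n) set" and \<phi> assume t: "t \<in> K" and ch: "chart M U \<phi>"
    have tI: "tau t \<in> I" using t unfolding K_def by simp
    have sp: "twice_diff_on U (\<lambda>v. f (\<phi> v) (tau t)) \<and> (\<forall>u\<in>U. spacelike_at (\<lambda>v. f (\<phi> v) (tau t)) u)"
      using fsp tI ch unfolding spacelike_imm_def comp_def by blast
    have Uo: "open U" using ch unfolding chart_def by blast
    have eq: "(\<lambda>x. G x t) \<circ> \<phi> = (\<lambda>v. lam t *\<^sub>R f (\<phi> v) (tau t))"
      by (simp add: G_def comp_def)
    show "twice_diff_on U ((\<lambda>x. G x t) \<circ> \<phi>)"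
      unfolding eq using twice_scale[OF Uo] sp by blast
    fix u assume u: "u \<in> U"
    have d: "(\<lambda>v. f (\<phi> v) (tau t)) differentiable at u" using sp u unfolding twice_diff_on_def by blast
    show "spacelike_at ((\<lambda>x. G x t) \<circ> \<phi>) u"
      unfolding eq using spacelike_scale[OF d] sp u lampos[OF t] by simp
  qed
  have Gder: "\<forall>x\<in>M. \<forall>t\<in>K. \<forall>(U :: (real^'n) set) \<phi> u. chart M U \<phi> \<and> u \<in> U \<and> \<phi> u = x \<longrightarrow>
          ((\<lambda>s. G x s) has_vector_derivative mc_lor (\<lambda>v. G (\<phi> v) t) u) (at t within K)"
  proof (intro ballI allI impI)
    fix x t and U :: "(real^'n) set" and \<phi> u
    assume x: "x \<in> M" and t: "t \<in> K" and cu: "chart M U \<phi> \<and> u \<in> U \<and> \<phi> u = x"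
    then have ch: "chart M U \<phi>" and u: "u \<in> U" and ux: "\<phi> u = x" by auto
    define h where "h = (\<lambda>v. f (\<phi> v) (tau t))"
    have tI: "tau t \<in> I" using t unfolding K_def by simp
    have tgt: "- r / (2 * N) < t" using t unfolding K_def by simp
    have St: "S t > 0" using Spos[OF tgt] .
    have sp: "twice_diff_on U h \<and> (\<forall>u\<in>U. spacelike_at h u)"
      using fsp tI ch unfolding spacelike_imm_def comp_def h_def by blast
    have Uo: "open U" using ch unfolding chart_def by blast
    have inM: "\<forall>v\<in>U. \<phi> v \<in> M" using ch unfolding chart_def by blast
    have cst: "\<forall>v\<in>U. lor (h v) (h v) = - r"
      using inM fhyp tI unfolding h_def hyp_def by blast
    have inv: "invertible (ind_metric h u)" using sp u spacelike_inv by blast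
    have tr: "lor (mc_lor h u) (h u) = - N"
      using mc_lor_trace[OF Uo u _ inv cst] sp unfolding N_def by blast
    have lt: "lam t > 0" using lampos[OF t] .
    have mcG: "mc_lor (\<lambda>v. G (\<phi> v) t) u = (1 / lam t) *\<^sub>R mc_lor h u"
    proof -
      have "(\<lambda>v. G (\<phi> v) t) = (\<lambda>v. lam t *\<^sub>R h v)" by (simp add: G_def h_def)
      then show ?thesis using mc_lor_scale[OF Uo u _ inv, of "lam t"] sp lt by simp
    qed
    have hu: "h u = f x (tau t)" by (simp add: h_def ux)
    have df: "((\<lambda>s. f x s) has_vector_derivative mc_hyp r h u) (at (tau t) within I)"
      using fder x tI cu unfolding h_def by blast
    have df': "((\<lambda>s. f x s) has_vector_derivative mc_hyp r h u) (at (tau t) within tau ` K)"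
      by (rule has_vector_derivative_within_subset[OF df]) (auto simp: K_def)
    have dtau0: "(tau has_real_derivative (r / (2 * N) * (2 * N / r / S t))) (at t)"
      unfolding tau_def S_def using St unfolding S_def
      by (auto intro!: derivative_eq_intros)
    have dtau: "(tau has_vector_derivative (1 / S t)) (at t within K)"
      using has_field_derivative_at_within[OF dtau0, of K] N r_pos
      by (simp add: has_real_derivative_iff_has_vector_derivative)
    have dlam0: "(lam has_real_derivative (inverse (sqrt (S t)) / 2 * (2 * N / r))) (at t)"
      unfolding lam_def S_def using St r_pos unfolding S_def
      by (auto intro!: derivative_eq_intros)
    have dlam: "(lam has_real_derivative (N / (r * lam t))) (at t within K)"
      using has_field_derivative_at_within[OF dlam0, of K] N r_pos
      by (simp add: lam_def field_simps)
    have chain: "((\<lambda>s. f x s) \<circ> tau has_vector_derivative (1 / S t) *\<^sub>R mc_hyp r h u) (at t within K)"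
      by (rule vector_diff_chain_within[OF dtau df'])
    have prod: "((\<lambda>s. lam s *\<^sub>R ((\<lambda>s. f x s) \<circ> tau) s) has_vector_derivative
        (lam t *\<^sub>R ((1 / S t) *\<^sub>R mc_hyp r h u) + (N / (r * lam t)) *\<^sub>R ((\<lambda>s. f x s) \<circ> tau) t)) (at t within K)"
      by (rule has_vector_derivative_scaleR[OF dlam chain])
    have l2: "lam t * lam t = S t" using St by (simp add: lam_def)
    have e1: "lam t * (1 / S t) = 1 / lam t" using l2 lt St by (simp add: field_simps)
    have e2: "lam t * (1 / S t) * (- N / r) + N / (r * lam t) = 0"
      unfolding e1 using lt r_pos by (simp add: field_simps)
    have val: "lam t *\<^sub>R ((1 / S t) *\<^sub>R mc_hyp r h u) + (N / (r * lam t)) *\<^sub>R ((\<lambda>s. f x s) \<circ> tau) t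
        = mc_lor (\<lambda>v. G (\<phi> v) t) u"
    proof -
      have "lam t *\<^sub>R ((1 / S t) *\<^sub>R mc_hyp r h u) + (N / (r * lam t)) *\<^sub>R ((\<lambda>s. f x s) \<circ> tau) t
          = lam t *\<^sub>R ((1 / S t) *\<^sub>R (mc_lor h u + (- N / r) *\<^sub>R h u)) + (N / (r * lam t)) *\<^sub>R h u"
        unfolding mc_hyp_def tr unfolding hu by simp
      also have "\<dots> = (lam t * (1 / S t)) *\<^sub>R mc_lor h u
          + (lam t * (1 / S t) * (- N / r) + N / (r * lam t)) *\<^sub>R h u"
        by (simp add: scaleR_add_right scaleR_add_left scaleR_diff_right scaleR_diff_left)
      also have "\<dots> = (1 / lam t) *\<^sub>R mc_lor h u" unfolding e1 e2 by simp
      finally show ?thesis using mcG by simp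
    qed
    have "(\<lambda>s. G x s) = (\<lambda>s. lam s *\<^sub>R ((\<lambda>s. f x s) \<circ> tau) s)" by (simp add: G_def fun_eq_iff)
    then show "((\<lambda>s. G x s) has_vector_derivative mc_lor (\<lambda>v. G (\<phi> v) t) u) (at t within K)"
      using prod val by simp
  qed
  have mcfG: "mcf_lor TYPE('n) M K G"
    unfolding mcf_lor_def using Kint K0 G0 Gsp Gder by blast
  have uniq: "\<forall>x\<in>M. \<forall>t\<in>J. t \<in> K \<longrightarrow> F x t = G x t"
    using F_unique mcfG by auto
  show ?thesis
    using mcfG uniq unfolding K_def G_def lam_def tau_def S_def N_def by simp
qed

end
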